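(* Let $d\ge2$ and $\Lambda>1$. For any $a\in C(\mathbb{T}^d;[1,\Lambda])$ and any $\delta>0$ there exist $a_\delta\in C^1(\mathbb{T}^d;[1,\Lambda])$ with $\|a-a_\delta\|_{C(\mathbb{T}^d)}\le\delta$ and a nonempty bounded open set $\Omega\subset\mathbb{R}^d$ with $C^2$ boundary such that $\mathbf{1}_{\overline\Omega}$ is a strict stationary subsolution of $-a_\delta(x)\kappa-\nabla a_\delta(x)\cdot n=0$, i.e. $-a_\delta(\xi)\kappa_{\partial\Omega}(\xi)-\nabla a_\delta(\xi)\cdot n_{\partial\Omega}(\xi)>0$ for all $\xi\in\partial\Omega$. If in addition $a\in C^2(\mathbb{T}^d;[1,\Lambda])$ and $p\in[1,\infty)$, then $a_\delta$ can moreover be chosen so that $\|a-a_\delta\|_{W^{1,p}(\mathbb{T}^d)}\le\delta$.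
   Context: Coefficients are $\mathbb{Z}^d$-periodic functions on $\mathbb{R}^d$. $n_{\partial\Omega}$ is the outward unit normal, $\kappa_{\partial\Omega}$ the mean curvature with convex sets having $\kappa\ge0$. *)

theory Defs
  imports "HOL-Analysis.Analysis"
begin

text \<open>Euclidean space R^d is real^'n with d = CARD('n).
  The torus T^d is modelled by Z^d-periodic functions on R^d.\<close>

definition int_vector :: "real^'n \<Rightarrow> bool" where
  "int_vector z \<longleftrightarrow> (\<forall>i. z $ i \<in> \<int>)"

definition periodic :: "(real^'n \<Rightarrow> real) \<Rightarrow> bool" where
  "periodic f \<longleftrightarrow> (\<forall>x z. int_vector z \<longrightarrow> f (x + z) = f x)"

text \<open>Gradient of a real-valued function at a point (meaningful where f is differentiable).\<close>
definition grad :: "(real^'n \<Rightarrow> real) \<Rightarrow> real^'n \<Rightarrow> real^'n" where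
  "grad f x = (SOME g. (f has_derivative (\<lambda>h. g \<bullet> h)) (at x))"

definition C1_fun :: "(real^'n \<Rightarrow> real) \<Rightarrow> bool" where
  "C1_fun f \<longleftrightarrow> (\<exists>g. (\<forall>x. (f has_derivative (\<lambda>h. g x \<bullet> h)) (at x)) \<and> continuous_on UNIV g)"

definition C2_fun :: "(real^'n \<Rightarrow> real) \<Rightarrow> bool" where
  "C2_fun f \<longleftrightarrow> (\<exists>g H. (\<forall>x. (f has_derivative (\<lambda>h. g x \<bullet> h)) (at x)) \<and>
      (\<forall>x. (g has_derivative (\<lambda>h. H x *v h)) (at x)) \<and> continuous_on UNIV H)"

definition C0_torus :: "real \<Rightarrow> (real^'n \<Rightarrow> real) \<Rightarrow> bool" where
  "C0_torus \<Lambda> f \<longleftrightarrow> continuous_on UNIV f \<and> periodic f \<and> (\<forall>x. 1 \<le> f x \<and> f x \<le> \<Lambda>)"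

definition C1_torus :: "real \<Rightarrow> (real^'n \<Rightarrow> real) \<Rightarrow> bool" where
  "C1_torus \<Lambda> f \<longleftrightarrow> C1_fun f \<and> periodic f \<and> (\<forall>x. 1 \<le> f x \<and> f x \<le> \<Lambda>)"

definition C2_torus :: "real \<Rightarrow> (real^'n \<Rightarrow> real) \<Rightarrow> bool" where
  "C2_torus \<Lambda> f \<longleftrightarrow> C2_fun f \<and> periodic f \<and> (\<forall>x. 1 \<le> f x \<and> f x \<le> \<Lambda>)"

definition sup_dist :: "(real^'n \<Rightarrow> real) \<Rightarrow> (real^'n \<Rightarrow> real) \<Rightarrow> real" where
  "sup_dist f g = (SUP x. \<bar>f x - g x\<bar>)"

definition W1p_norm :: "real \<Rightarrow> (real^'n \<Rightarrow> real) \<Rightarrow> real" where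
  "W1p_norm p f = (integral (cbox 0 1) (\<lambda>x. \<bar>f x\<bar> powr p + norm (grad f x) powr p)) powr (1 / p)"

text \<open>C^2 defining function of an open set: Omega = {phi < 0}, phi is C^2 on R^d and
  grad phi does not vanish on {phi = 0} (= boundary of Omega).  Omega has C^2 boundary iff
  such a function exists.\<close>
definition C2_defining :: "(real^'n \<Rightarrow> real) \<Rightarrow> (real^'n) set \<Rightarrow> bool" where
  "C2_defining \<phi> \<Omega> \<longleftrightarrow> C2_fun \<phi> \<and> \<Omega> = {x. \<phi> x < 0} \<and> (\<forall>x. \<phi> x = 0 \<longrightarrow> grad \<phi> x \<noteq> 0)"

definition C2_boundary :: "(real^'n) set \<Rightarrow> bool" where
  "C2_boundary \<Omega> \<longleftrightarrow> (\<exists>\<phi>. C2_defining \<phi> \<Omega>)"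

text \<open>Outward unit normal and mean curvature (sum of principal curvatures, = div n, so that
  convex sets have kappa >= 0); both are independent of the chosen defining function.\<close>
definition outward_normal :: "(real^'n) set \<Rightarrow> real^'n \<Rightarrow> real^'n" where
  "outward_normal \<Omega> x = (let \<phi> = (SOME \<phi>. C2_defining \<phi> \<Omega>) in grad \<phi> x /\<^sub>R norm (grad \<phi> x))"

definition divergence :: "(real^'n \<Rightarrow> real^'n) \<Rightarrow> real^'n \<Rightarrow> real" where
  "divergence F x = (\<Sum>i\<in>UNIV. frechet_derivative F (at x) (axis i 1) $ i)"

definition mean_curvature :: "(real^'n) set \<Rightarrow> real^'n \<Rightarrow> real" where
  "mean_curvature \<Omega> x = (let \<phi> = (SOME \<phi>. C2_defining \<phi> \<Omega>) in
      divergence (\<lambda>y. grad \<phi> y /\<^sub>R norm (grad \<phi> y)) x)"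

definition strict_stat_subsol :: "(real^'n \<Rightarrow> real) \<Rightarrow> (real^'n) set \<Rightarrow> bool" where
  "strict_stat_subsol a \<Omega> \<longleftrightarrow> (\<forall>\<xi>\<in>frontier \<Omega>.
      - a \<xi> * mean_curvature \<Omega> \<xi> - grad a \<xi> \<bullet> outward_normal \<Omega> \<xi> > 0)"

end

theory Submission
  imports Defs
begin

lemma grad_eq:
  fixes f :: "real^'n \<Rightarrow> real"
  assumes "(f has_derivative (\<lambda>h. G \<bullet> h)) (at x)"
  shows "grad f x = G"
proof -
  have ex: "\<exists>g. (f has_derivative (\<lambda>h. g \<bullet> h)) (at x)" using assms by blast
  define g' where "g' = grad f x"
  have d: "(f has_derivative (\<lambda>h. g' \<bullet> h)) (at x)"
    unfolding g'_def grad_def by (rule someI_ex[OF ex])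
  have "(\<lambda>h. g' \<bullet> h) = (\<lambda>h. G \<bullet> h)" using has_derivative_unique[OF d assms] .
  then have "g' \<bullet> (g' - G) = G \<bullet> (g' - G)" by metis
  then have "(g' - G) \<bullet> (g' - G) = 0" by (simp add: inner_diff_left)
  then show ?thesis unfolding g'_def by simp
qed

lemma C2_fun_D:
  assumes "C2_fun f"
  obtains g H where "\<And>x. (f has_derivative (\<lambda>h. g x \<bullet> h)) (at x)"
    "\<And>x. (g has_derivative (\<lambda>h. H x *v h)) (at x)" "\<And>x. grad f x = g x"
  using assms grad_eq unfolding C2_fun_def by metis

lemma ball_normal_curv:
  fixes c :: "real^'n" and \<psi> :: "real^'n \<Rightarrow> real"
  assumes r: "r > 0" and def: "C2_defining \<psi> (ball c r)" and \<xi>: "\<xi> \<in> sphere c r"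
  shows "grad \<psi> \<xi> /\<^sub>R norm (grad \<psi> \<xi>) = (\<xi> - c) /\<^sub>R r"
    and "divergence (\<lambda>y. grad \<psi> y /\<^sub>R norm (grad \<psi> y)) \<xi> = (real CARD('n) - 1) / r"
proof -
  from def have C2: "C2_fun \<psi>" and bal: "ball c r = {x. \<psi> x < 0}"
    and nz: "\<And>x. \<psi> x = 0 \<Longrightarrow> grad \<psi> x \<noteq> 0"
    unfolding C2_defining_def by auto
  obtain g H where dpsi: "\<And>x. (\<psi> has_derivative (\<lambda>h. g x \<bullet> h)) (at x)"
    and dg: "\<And>x. (g has_derivative (\<lambda>h. H x *v h)) (at x)" and gg: "\<And>x. grad \<psi> x = g x"
    using C2_fun_D[OF C2] by metis
  have contpsi: "continuous_on UNIV \<psi>"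
    using dpsi by (meson has_derivative_continuous_on has_derivative_at_withinI)
  have zero: "\<psi> y = 0" if y: "y \<in> sphere c r" for y
  proof -
    have "\<psi> y \<ge> 0" using y bal by (metis mem_Collect_eq mem_ball mem_sphere not_less order_refl)
    moreover have "closed {x. \<psi> x \<le> 0}"
      using contpsi by (simp add: closed_Collect_le)
    then have "closure (ball c r) \<subseteq> {x. \<psi> x \<le> 0}"
      by (intro closure_minimal) (auto simp: bal)
    then have "\<psi> y \<le> 0" using y r by auto
    ultimately show ?thesis by simp
  qed
  define N where "N y = g y /\<^sub>R norm (g y)" for y
  have gnz: "g y \<noteq> 0" if "y \<in> sphere c r" for y using nz[OF zero[OF that]] gg by simp
  define \<gamma> where "\<gamma> y t s = c + cos s *\<^sub>R (y - c) + sin s *\<^sub>R t" for y t :: "real^'n" and s :: real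
  have \<gamma>_sph: "\<gamma> y t s \<in> sphere c r"
    if "y \<in> sphere c r" "t \<bullet> (y - c) = 0" "norm t = r" for y t s
  proof -
    have "norm (\<gamma> y t s - c)^2 = (cos s)^2 * (norm (y - c))^2 + (sin s)^2 * (norm t)^2
        + 2 * cos s * sin s * (t \<bullet> (y - c))"
      unfolding \<gamma>_def power2_norm_eq_inner
      by (simp add: inner_add_left inner_add_right inner_commute algebra_simps power2_eq_square)
    also have "\<dots> = ((sin s)\<^sup>2 + (cos s)\<^sup>2) * r^2"
    proof -
      have "norm (y - c) = r" using that(1) by (simp add: dist_norm norm_minus_commute)
      moreover have "t \<bullet> (y - c) = 0" using that(2) .
      moreover have "r^2 * (cos s)^2 + r^2 * (sin s)^2 = r^2"
        by (metis distrib_left mult.right_neutral sin_cos_squared_add add.commute)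
      ultimately show ?thesis using that(3) by (simp only:) (simp add: algebra_simps)
    qed
    also have "\<dots> = r^2" by simp
    finally have "norm (\<gamma> y t s - c) = r" using r
      by (metis norm_ge_zero power2_eq_imp_eq less_le)
    then show ?thesis by (simp add: dist_norm norm_minus_commute)
  qed
  have \<gamma>0: "\<gamma> y t 0 = y" for y t by (simp add: \<gamma>_def)
  have d\<gamma>: "(\<gamma> y t has_derivative (\<lambda>h. h *\<^sub>R t)) (at 0)" for y t
  proof -
    have "(\<gamma> y t has_vector_derivative (- sin 0 *\<^sub>R (y - c) + cos 0 *\<^sub>R t)) (at 0)"
      unfolding \<gamma>_def by (auto intro!: derivative_eq_intros)
    then show ?thesis by (simp add: has_vector_derivative_def)
  qed
  have tang: "g y \<bullet> t = 0" if y: "y \<in> sphere c r" and t: "t \<bullet> (y - c) = 0" for y t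
  proof (cases "t = 0")
    case True then show ?thesis by simp
  next
    case False
    define t' where "t' = (r / norm t) *\<^sub>R t"
    have t'1: "t' \<bullet> (y - c) = 0" using t by (simp add: t'_def)
    have t'2: "norm t' = r" using False r by (simp add: t'_def)
    have "((\<lambda>s. \<psi> (\<gamma> y t' s)) has_derivative (\<lambda>h. g (\<gamma> y t' 0) \<bullet> (h *\<^sub>R t'))) (at 0)"
      by (rule has_derivative_compose[OF d\<gamma> dpsi])
    moreover have "(\<lambda>s. \<psi> (\<gamma> y t' s)) = (\<lambda>s. 0)"
      using zero \<gamma>_sph[OF y t'1 t'2] by auto
    ultimately have "((\<lambda>s. 0::real) has_derivative (\<lambda>h. g y \<bullet> (h *\<^sub>R t'))) (at 0)"
      by (simp add: \<gamma>0)
    then have "(\<lambda>h::real. g y \<bullet> (h *\<^sub>R t')) = (\<lambda>h. 0)"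
      using has_derivative_unique has_derivative_const by blast
    then have "g y \<bullet> t' = 0" by (metis scaleR_one)
    then show ?thesis using False r by (simp add: t'_def)
  qed
  have normal: "N y = (y - c) /\<^sub>R r" if y: "y \<in> sphere c r" for y
  proof -
    define v where "v = y - c"
    have nv: "norm v = r" using y by (simp add: v_def dist_norm norm_minus_commute)
    have vv: "v \<bullet> v = r^2" using nv power2_norm_eq_inner[of v] by simp
    define lam where "lam = (g y \<bullet> v) / (v \<bullet> v)"
    define w where "w = g y - lam *\<^sub>R v"
    have "w \<bullet> v = 0" using r vv by (simp add: w_def lam_def inner_diff_left)
    then have "g y \<bullet> w = 0" using tang[OF y, of w] by (simp add: v_def)
    then have "w \<bullet> w = 0" using \<open>w \<bullet> v = 0\<close> by (simp add: w_def inner_diff_left inner_commute)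
    then have gl: "g y = lam *\<^sub>R v" by (simp add: w_def)
    have "lam \<noteq> 0" using gnz[OF y] gl by auto
    have "lam > 0"
    proof (rule ccontr)
      assume "\<not> lam > 0"
      then have neg: "lam < 0" using \<open>lam \<noteq> 0\<close> by simp
      define f where "f = (\<lambda>s. \<psi> (c + s *\<^sub>R v))"
      have "((\<lambda>s. c + s *\<^sub>R v) has_derivative (\<lambda>h. h *\<^sub>R v)) (at 1)"
        by (auto intro!: derivative_eq_intros)
      from has_derivative_compose[OF this dpsi]
      have "(f has_derivative (\<lambda>h. g y \<bullet> (h *\<^sub>R v))) (at 1)"
        by (simp add: f_def v_def)
      then have "DERIV f 1 :> g y \<bullet> v"
        by (simp add: has_field_derivative_def mult_commute_abs)
      moreover have "g y \<bullet> v < 0" using gl neg vv r by (simp add: mult_neg_pos)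
      ultimately obtain e where e: "e > 0" "\<And>h. h > 0 \<Longrightarrow> h < e \<Longrightarrow> f 1 < f (1 - h)"
        using DERIV_neg_dec_left by blast
      define h where "h = min (e/2) (1/2)"
      have "f 1 < f (1 - h)" using e by (intro e(2)) (auto simp: h_def)
      moreover have "f 1 = 0" using zero[OF y] by (simp add: f_def v_def)
      moreover have "c + (1 - h) *\<^sub>R v \<in> ball c r"
        using nv r e by (auto simp: h_def dist_norm)
      then have "f (1 - h) < 0" using bal by (auto simp: f_def)
      ultimately show False by simp
    qed
    then show ?thesis using gl nv r by (simp add: N_def v_def)
  qed
  show "grad \<psi> \<xi> /\<^sub>R norm (grad \<psi> \<xi>) = (\<xi> - c) /\<^sub>R r"
    using normal[OF \<xi>] by (simp add: gg N_def)
  have gcont: "isCont g \<xi>" using dg has_derivative_continuous by blast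
  have "N differentiable (at \<xi>)"
  proof -
    have gd: "g differentiable (at \<xi>)" using dg by (auto intro: differentiableI)
    have nd: "(\<lambda>y. norm (g y)) differentiable (at \<xi>)"
      by (rule differentiable_compose[OF _ gd]) (use gnz[OF \<xi>] in simp)
    have "(\<lambda>y. inverse (norm (g y)) *\<^sub>R g y) differentiable (at \<xi>)"
      using gnz[OF \<xi>] by (intro differentiable_scaleR differentiable_inverse nd gd) auto
    then show ?thesis by (simp add: N_def[abs_def] divide_inverse_commute)
  qed
  then obtain DN where dN: "(N has_derivative DN) (at \<xi>)" by (auto simp: differentiable_def)
  have linDN: "linear DN" using dN has_derivative_linear by blast
  have fd: "frechet_derivative N (at \<xi>) = DN" using frechet_derivative_at[OF dN] by simp
  have perp: "DN h \<bullet> N \<xi> = 0" for h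
  proof -
    have d1: "((\<lambda>y. N y \<bullet> N y) has_derivative (\<lambda>h. N \<xi> \<bullet> DN h + DN h \<bullet> N \<xi>)) (at \<xi>)"
      by (rule has_derivative_inner[OF dN dN])
    obtain e where e: "e > 0" "\<And>y. dist \<xi> y < e \<Longrightarrow> g y \<noteq> 0"
      using continuous_at_avoid[OF gcont gnz[OF \<xi>]] by blast
    have "((\<lambda>y. 1::real) has_derivative (\<lambda>h. N \<xi> \<bullet> DN h + DN h \<bullet> N \<xi>)) (at \<xi>)"
    proof (rule has_derivative_transform_within[OF d1 e(1)])
      fix y assume "dist y \<xi> < e"
      then have "g y \<noteq> 0" using e(2) by (simp add: dist_commute)
      then show "N y \<bullet> N y = 1" by (simp add: N_def power2_norm_eq_inner[symmetric] divide_inverse)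
    qed auto
    then have "(\<lambda>h. N \<xi> \<bullet> DN h + DN h \<bullet> N \<xi>) = (\<lambda>h. 0)"
      using has_derivative_unique has_derivative_const by blast
    then have "N \<xi> \<bullet> DN h + DN h \<bullet> N \<xi> = 0" by metis
    then show ?thesis by (simp add: inner_commute)
  qed
  have tanD: "DN t = t /\<^sub>R r" if t: "t \<bullet> (\<xi> - c) = 0" for t
  proof (cases "t = 0")
    case True then show ?thesis using linDN linear_0 by auto
  next
    case False
    define t' where "t' = (r / norm t) *\<^sub>R t"
    have t'1: "t' \<bullet> (\<xi> - c) = 0" using t by (simp add: t'_def)
    have t'2: "norm t' = r" using False r by (simp add: t'_def)
    have "((\<lambda>s. N (\<gamma> \<xi> t' s)) has_derivative (\<lambda>h. DN (h *\<^sub>R t'))) (at 0)"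
      using has_derivative_compose[OF d\<gamma>, of N DN \<xi> t'] dN by (simp add: \<gamma>0)
    moreover have "(\<lambda>s. N (\<gamma> \<xi> t' s)) = (\<lambda>s. (\<gamma> \<xi> t' s - c) /\<^sub>R r)"
      using normal \<gamma>_sph[OF \<xi> t'1 t'2] by auto
    moreover have "((\<lambda>s. (\<gamma> \<xi> t' s - c) /\<^sub>R r) has_derivative (\<lambda>h. (h *\<^sub>R t') /\<^sub>R r)) (at 0)"
      using d\<gamma>[of \<xi> t'] by (auto intro!: derivative_eq_intros)
    ultimately have "(\<lambda>h. DN (h *\<^sub>R t')) = (\<lambda>h. (h *\<^sub>R t') /\<^sub>R r)"
      using has_derivative_unique by metis
    then have "DN t' = t' /\<^sub>R r" by (metis scaleR_one)
    then have "(r / norm t) *\<^sub>R DN t = (r / norm t) *\<^sub>R (t /\<^sub>R r)"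
      using linear_cmul[OF linDN] by (simp add: t'_def)
    then have "(norm t / r) *\<^sub>R ((r / norm t) *\<^sub>R DN t) = (norm t / r) *\<^sub>R ((r / norm t) *\<^sub>R (t /\<^sub>R r))"
      by simp
    moreover have "(norm t / r) * (r / norm t) = 1" using False r by simp
    ultimately show ?thesis by (simp only: scaleR_scaleR) simp
  qed
  define n where "n = N \<xi>"
  have n_eq: "n = (\<xi> - c) /\<^sub>R r" using normal[OF \<xi>] by (simp add: n_def)
  have nn: "n \<bullet> n = 1"
  proof -
    have "norm (\<xi> - c) = r" using \<xi> by (simp add: dist_norm norm_minus_commute)
    then have "norm n = 1" using r by (simp add: n_eq)
    then show ?thesis by (metis norm_eq_1 inner_real_def)
  qed
  have comp: "DN (axis i 1) $ i = n $ i * DN n $ i + (1 - n $ i * n $ i) / r" for i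
  proof -
    define t where "t = axis i 1 - (n $ i) *\<^sub>R n"
    have "t \<bullet> n = 0" using nn by (simp add: t_def inner_diff_left inner_axis')
    then have "t \<bullet> (\<xi> - c) = 0" using r n_eq by simp
    then have "DN t = t /\<^sub>R r" by (rule tanD)
    moreover have "axis i 1 = (n $ i) *\<^sub>R n + t" by (simp add: t_def)
    ultimately have "DN (axis i 1) = (n $ i) *\<^sub>R DN n + t /\<^sub>R r"
      using linear_add[OF linDN] linear_cmul[OF linDN] by metis
    then show ?thesis by (simp add: t_def axis_def divide_simps)
  qed
  have "divergence N \<xi> = (\<Sum>i\<in>UNIV. n $ i * DN n $ i) + (\<Sum>i\<in>UNIV. (1 - n $ i * n $ i) / r)"
    unfolding divergence_def fd comp by (simp add: sum.distrib)
  also have "(\<Sum>i\<in>UNIV. n $ i * DN n $ i) = 0"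
    using perp[of n] by (simp add: n_def inner_vec_def mult.commute)
  also have "(\<Sum>i\<in>UNIV. (1 - n $ i * n $ i) / r) = (real CARD('n) - 1) / r"
    using nn by (simp add: sum_divide_distrib[symmetric] sum_subtractf inner_vec_def)
  finally show "divergence (\<lambda>y. grad \<psi> y /\<^sub>R norm (grad \<psi> y)) \<xi> = (real CARD('n) - 1) / r"
    by (simp add: gg N_def[abs_def])
qed

definition qf :: "real \<Rightarrow> real" where "qf t = (max 0 t)^2"

lemma qf_deriv: "(qf has_real_derivative (2 * max 0 t)) (at t)"
proof -
  consider "t > 0" | "t < 0" | "t = 0" by linarith
  then show ?thesis
  proof cases
    case 1
    have "((\<lambda>t. t^2) has_real_derivative (2 * t)) (at t)"
      by (auto intro!: derivative_eq_intros)
    from has_field_derivative_transform_within_open[OF this, of "{0<..}" qf]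
    show ?thesis using 1 by (auto simp: qf_def)
  next
    case 2
    have "((\<lambda>t. 0) has_real_derivative 0) (at t)" by simp
    from has_field_derivative_transform_within_open[OF this, of "{..<0}" qf]
    show ?thesis using 2 by (auto simp: qf_def)
  next
    case 3
    have "((\<lambda>y. (qf y - qf 0) / (y - 0)) \<longlongrightarrow> 0) (at 0)"
    proof (rule Lim_null_comparison)
      show "\<forall>\<^sub>F y in at 0. norm ((qf y - qf 0) / (y - 0)) \<le> \<bar>y\<bar>"
      proof (rule always_eventually, intro allI)
        fix y :: real
        show "norm ((qf y - qf 0) / (y - 0)) \<le> \<bar>y\<bar>"
          by (cases "y > 0") (auto simp: qf_def power2_eq_square abs_mult divide_simps)
      qed
      show "((\<lambda>y. \<bar>y\<bar>) \<longlongrightarrow> 0) (at (0::real))"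
        using tendsto_rabs[OF tendsto_ident_at[of "0::real" UNIV]] by simp
    qed
    then show ?thesis using 3 by (simp add: has_field_derivative_iff)
  qed
qed

lemma qf_deriv_chain [derivative_intros]:
  "(f has_real_derivative f') (at x) \<Longrightarrow> ((\<lambda>x. qf (f x)) has_real_derivative (2 * max 0 (f x) * f')) (at x)"
  using DERIV_chain2[OF qf_deriv] by blast

definition sg :: "real \<Rightarrow> real" where
  "sg u = (qf (1 - u) - 2 * qf (- u) + qf (-1 - u)) / 2"

definition sg' :: "real \<Rightarrow> real" where
  "sg' u = - max 0 (1 - u) + 2 * max 0 (- u) - max 0 (-1 - u)"

lemma sg_deriv: "(sg has_real_derivative sg' u) (at u)"
  unfolding sg_def[abs_def] sg'_def
  by (auto intro!: derivative_eq_intros simp: field_simps)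

lemma sg'_cont: "continuous_on UNIV sg'"
  unfolding sg'_def[abs_def] by (intro continuous_intros)

lemma sg_bounds: "0 \<le> sg u \<and> sg u \<le> 1"
proof -
  consider "u \<le> -1" | "-1 < u \<and> u \<le> 0" | "0 < u \<and> u \<le> 1" | "1 < u" by linarith
  then show ?thesis
  proof cases
    case 1 then show ?thesis by (simp add: sg_def qf_def max_def power2_eq_square algebra_simps)
  next
    case 2
    define v where "v = 1 + u"
    have v: "0 < v" "v \<le> 1" using 2 by (auto simp: v_def)
    have "v^2 \<le> 1" using v by (simp add: power_le_one)
    moreover have "sg u = 1 - v^2 / 2" using 2
      by (simp add: sg_def qf_def max_def v_def power2_eq_square field_simps)
    ultimately show ?thesis by simp
  next
    case 3
    define v where "v = 1 - u"
    have v: "0 \<le> v" "v < 1" using 3 by (auto simp: v_def)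
    have "v^2 \<le> 1" using v by (simp add: power_le_one)
    moreover have "sg u = v^2 / 2" using 3
      by (simp add: sg_def qf_def max_def v_def power2_eq_square algebra_simps)
    moreover have "0 \<le> v^2" by simp
    ultimately show ?thesis by linarith
  next
    case 4 then show ?thesis by (simp add: sg_def qf_def max_def)
  qed
qed

lemma sg_zero: "u \<ge> 1 \<Longrightarrow> sg u = 0" by (simp add: sg_def qf_def max_def)
lemma sg'_zero: "u \<ge> 1 \<or> u \<le> -1 \<Longrightarrow> sg' u = 0" by (auto simp: sg'_def max_def)
lemma sg'_0: "sg' 0 = -1" by (simp add: sg'_def)
lemma sg'_bound: "\<bar>sg' u\<bar> \<le> 1" by (auto simp: sg'_def max_def abs_if)

definition c0 :: "real^'n" where "c0 = (\<chi> i. 1/2)"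
definition Hb :: "real \<Rightarrow> real \<Rightarrow> real \<Rightarrow> real" where "Hb m w s = m * w * sg ((s - 1/16) / w)"
definition Hb' :: "real \<Rightarrow> real \<Rightarrow> real \<Rightarrow> real" where "Hb' m w s = m * sg' ((s - 1/16) / w)"
definition Sf :: "real^'n \<Rightarrow> real" where "Sf x = (\<Sum>i\<in>UNIV. (frac (x$i) - 1/2)^2)"
definition bump :: "real \<Rightarrow> real \<Rightarrow> real^'n \<Rightarrow> real" where "bump m w x = Hb m w (Sf x)"
definition gbump :: "real \<Rightarrow> real \<Rightarrow> real^'n \<Rightarrow> real^'n" where
  "gbump m w x = Hb' m w (Sf x) *\<^sub>R (\<chi> i. 2 * (frac (x$i) - 1/2))"

lemma norm2_vec: "(norm (v::real^'n))^2 = (\<Sum>i\<in>UNIV. (v$i)^2)"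
  by (simp only: power2_norm_eq_inner inner_vec_def) (simp add: power2_eq_square)

lemma Hb_deriv: "w > 0 \<Longrightarrow> (Hb m w has_real_derivative Hb' m w s) (at s)"
  unfolding Hb_def[abs_def] Hb'_def
  by (rule derivative_eq_intros DERIV_chain2[OF sg_deriv] | simp)+

lemma Hb'_cont: "w > 0 \<Longrightarrow> continuous_on UNIV (Hb' m w)"
  unfolding Hb'_def[abs_def]
  by (intro continuous_intros continuous_on_compose2[OF sg'_cont]) auto

lemma Hb_vanish:
  assumes "0 < w" "w \<le> 1/16" "s \<ge> 1/8"
  shows "Hb m w s = 0" "Hb' m w s = 0"
proof -
  have "1 \<le> (s - 1/16) / w" using assms by (simp add: field_simps)
  then show "Hb m w s = 0" "Hb' m w s = 0"
    by (auto simp: Hb_def Hb'_def sg_zero sg'_zero)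
qed

lemma sq_ge: "3/8 \<le> \<bar>t::real\<bar> \<Longrightarrow> 1/8 \<le> t^2"
proof -
  assume "3/8 \<le> \<bar>t\<bar>"
  then have "(3/8)^2 \<le> \<bar>t\<bar>^2" by (rule power_mono) simp
  moreover have "(3/8::real)^2 = 9/64" by (simp add: power2_eq_square)
  ultimately show ?thesis by simp
qed

lemma coord_far:
  fixes a b :: real
  assumes "\<bar>a - b\<bar> < 1/8" "\<lfloor>a\<rfloor> \<noteq> \<lfloor>b\<rfloor>"
  shows "1/8 \<le> (frac a - 1/2)^2" "1/8 \<le> (a - of_int \<lfloor>b\<rfloor> - 1/2)^2"
proof -
  define k where "k = \<lfloor>b\<rfloor>"
  have b1: "of_int k \<le> b" "b < of_int k + 1" unfolding k_def by linarith+
  have a1: "of_int \<lfloor>a\<rfloor> \<le> a" "a < of_int \<lfloor>a\<rfloor> + 1" by linarith+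
  have fa: "frac a = a - of_int \<lfloor>a\<rfloor>" by (simp add: frac_def)
  consider "\<lfloor>a\<rfloor> < k" | "\<lfloor>a\<rfloor> > k" using assms(2) k_def by linarith
  then have "3/8 \<le> \<bar>frac a - 1/2\<bar> \<and> 3/8 \<le> \<bar>a - of_int k - 1/2\<bar>"
  proof cases
    case 1
    then have "\<lfloor>a\<rfloor> \<le> k - 1" by simp
    then have i1: "of_int \<lfloor>a\<rfloor> \<le> (of_int k::real) - 1" by linarith
    have "a < of_int k" using a1 i1 by linarith
    moreover have "a > of_int k - 1/8" using assms(1) b1 by linarith
    ultimately have "\<lfloor>a\<rfloor> = k - 1" by linarith
    then show ?thesis using fa \<open>a < of_int k\<close> \<open>a > of_int k - 1/8\<close> by auto
  next
    case 2
    then have "\<lfloor>a\<rfloor> \<ge> k + 1" by simp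
    then have i1: "of_int \<lfloor>a\<rfloor> \<ge> (of_int k::real) + 1" by linarith
    have "a \<ge> of_int k + 1" using a1 i1 by linarith
    moreover have "a < of_int k + 9/8" using assms(1) b1 by linarith
    ultimately have "\<lfloor>a\<rfloor> = k + 1" by linarith
    then show ?thesis using fa \<open>a \<ge> of_int k + 1\<close> \<open>a < of_int k + 9/8\<close> by auto
  qed
  then show "1/8 \<le> (frac a - 1/2)^2" "1/8 \<le> (a - of_int \<lfloor>b\<rfloor> - 1/2)^2"
    using sq_ge k_def by auto
qed

definition flv :: "real^'n \<Rightarrow> real^'n" where "flv x = (\<chi> i. of_int \<lfloor>x$i\<rfloor>)"

lemma bump_local:
  fixes x y :: "real^'n"
  assumes w: "0 < w" "w \<le> 1/16" and d: "dist y x < 1/8"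
  shows "bump m w y = Hb m w ((norm (y - flv x - c0))^2)"
    and "gbump m w y = Hb' m w ((norm (y - flv x - c0))^2) *\<^sub>R (2 *\<^sub>R (y - flv x - c0))"
proof -
  have N2: "(norm (y - flv x - c0))^2 = (\<Sum>i\<in>UNIV. (y$i - of_int \<lfloor>x$i\<rfloor> - 1/2)^2)"
    by (simp add: norm2_vec flv_def c0_def)
  have close: "\<bar>y$i - x$i\<bar> < 1/8" for i
    using component_le_norm_cart[of "y - x" i] d by (simp add: dist_norm)
  have "bump m w y = Hb m w ((norm (y - flv x - c0))^2)
     \<and> gbump m w y = Hb' m w ((norm (y - flv x - c0))^2) *\<^sub>R (2 *\<^sub>R (y - flv x - c0))"
  proof (cases "\<forall>i. \<lfloor>y$i\<rfloor> = \<lfloor>x$i\<rfloor>")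
    case True
    then have fr: "frac (y$i) = y$i - of_int \<lfloor>x$i\<rfloor>" for i by (simp add: frac_def)
    have "Sf y = (norm (y - flv x - c0))^2" unfolding N2 Sf_def fr ..
    moreover have "(\<chi> i. 2 * (frac (y$i) - 1/2)) = 2 *\<^sub>R (y - flv x - c0)"
      by (simp add: vec_eq_iff fr flv_def c0_def algebra_simps)
    ultimately show ?thesis by (simp add: bump_def gbump_def)
  next
    case False
    then obtain i where i: "\<lfloor>y$i\<rfloor> \<noteq> \<lfloor>x$i\<rfloor>" by blast
    note cf = coord_far[OF close[of i] i]
    have "1/8 \<le> Sf y"
    proof -
      have "(frac (y$i) - 1/2)^2 \<le> Sf y" unfolding Sf_def
        by (rule member_le_sum) auto
      then show ?thesis using cf(1) by linarith
    qed
    moreover have "1/8 \<le> (norm (y - flv x - c0))^2"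
    proof -
      have "(y$i - of_int \<lfloor>x$i\<rfloor> - 1/2)^2 \<le> (norm (y - flv x - c0))^2" unfolding N2
        by (rule member_le_sum) auto
      then show ?thesis using cf(2) by linarith
    qed
    ultimately show ?thesis using Hb_vanish[OF w] by (simp add: bump_def gbump_def)
  qed
  then show "bump m w y = Hb m w ((norm (y - flv x - c0))^2)"
    "gbump m w y = Hb' m w ((norm (y - flv x - c0))^2) *\<^sub>R (2 *\<^sub>R (y - flv x - c0))" by auto
qed

lemma bump_deriv:
  fixes x :: "real^'n"
  assumes w: "0 < w" "w \<le> 1/16"
  shows "(bump m w has_derivative (\<lambda>h. gbump m w x \<bullet> h)) (at x)"
proof -
  define p where "p = flv x + c0"
  have eqs: "bump m w y = Hb m w ((y - p) \<bullet> (y - p))" if "dist y x < 1/8" for y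
    using bump_local(1)[OF w that] by (simp add: p_def power2_norm_eq_inner diff_diff_eq)
  have gx: "gbump m w x = Hb' m w ((x - p) \<bullet> (x - p)) *\<^sub>R (2 *\<^sub>R (x - p))"
    using bump_local(2)[OF w, of x x] by (simp add: p_def power2_norm_eq_inner diff_diff_eq)
  have d1: "((\<lambda>y. (y - p) \<bullet> (y - p)) has_derivative (\<lambda>h. h \<bullet> (x - p) + (x - p) \<bullet> h)) (at x)"
    by (auto intro!: derivative_eq_intros)
  have d2: "(Hb m w has_derivative (\<lambda>t. Hb' m w ((x - p) \<bullet> (x - p)) * t)) (at ((x - p) \<bullet> (x - p)))"
    using Hb_deriv[OF w(1)] by (simp add: has_field_derivative_def mult_commute_abs)
  have "((\<lambda>y. Hb m w ((y - p) \<bullet> (y - p))) has_derivative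
        (\<lambda>h. Hb' m w ((x - p) \<bullet> (x - p)) * (h \<bullet> (x - p) + (x - p) \<bullet> h))) (at x)"
    using has_derivative_compose[OF d1 d2] by simp
  moreover have "(\<lambda>h. Hb' m w ((x - p) \<bullet> (x - p)) * (h \<bullet> (x - p) + (x - p) \<bullet> h)) = (\<lambda>h. gbump m w x \<bullet> h)"
    by (rule ext) (simp add: gx inner_commute algebra_simps)
  ultimately have "((\<lambda>y. Hb m w ((y - p) \<bullet> (y - p))) has_derivative (\<lambda>h. gbump m w x \<bullet> h)) (at x)"
    by simp
  then show ?thesis
    by (rule has_derivative_transform_within[where d="1/8"]) (auto simp: eqs)
qed

lemma gbump_cont:
  assumes w: "0 < w" "w \<le> 1/16"
  shows "continuous_on UNIV (gbump m w :: real^'n \<Rightarrow> real^'n)"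
proof -
  have "isCont (gbump m w) x" for x :: "real^'n"
  proof -
    define p where "p = flv x + c0"
    have eqs: "gbump m w y = Hb' m w ((y - p) \<bullet> (y - p)) *\<^sub>R (2 *\<^sub>R (y - p))" if "dist y x < 1/8" for y
      using bump_local(2)[OF w that] by (simp add: p_def power2_norm_eq_inner diff_diff_eq)
    have "continuous_on UNIV (\<lambda>y. Hb' m w ((y - p) \<bullet> (y - p)) *\<^sub>R (2 *\<^sub>R (y - p)))"
      by (intro continuous_intros continuous_on_compose2[OF Hb'_cont[OF w(1)]]) auto
    then have "isCont (\<lambda>y. Hb' m w ((y - p) \<bullet> (y - p)) *\<^sub>R (2 *\<^sub>R (y - p))) x"
      by (simp add: continuous_on_eq_continuous_at)
    then show ?thesis
      by (rule continuous_transform_within[where \<delta>="1/8"]) (auto simp: eqs)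
  qed
  then show ?thesis by (simp add: continuous_at_imp_continuous_on)
qed

lemma bump_periodic: "periodic (bump m w)"
  unfolding periodic_def int_vector_def bump_def Sf_def
  by (auto simp: frac_add_int_right)

lemma bump_range: "0 < m \<Longrightarrow> 0 < w \<Longrightarrow> 0 \<le> bump m w x \<and> bump m w x \<le> m * w"
  using sg_bounds[of "(Sf x - 1/16)/w"] by (auto simp: bump_def Hb_def)

lemma sphere_frac:
  assumes "\<xi> \<in> sphere (c0::real^'n) (1/4)"
  shows "frac (\<xi>$i) = \<xi>$i"
proof -
  have "\<bar>\<xi>$i - 1/2\<bar> \<le> 1/4"
    using component_le_norm_cart[of "\<xi> - c0" i] assms by (simp add: dist_norm norm_minus_commute c0_def)
  then have "0 \<le> \<xi>$i" "\<xi>$i < 1" using abs_le_iff[of "\<xi>$i - 1/2" "1/4"] by linarith+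
  then show ?thesis by (intro frac_eq_id) auto
qed

lemma gbump_sphere:
  assumes w: "0 < w" and \<xi>: "\<xi> \<in> sphere (c0::real^'n) (1/4)"
  shows "gbump m w \<xi> = (-2 * m) *\<^sub>R (\<xi> - c0)"
proof -
  have "Sf \<xi> = (norm (\<xi> - c0))^2"
    by (simp add: Sf_def norm2_vec sphere_frac[OF \<xi>] c0_def)
  also have "\<dots> = 1/16"
  proof -
    have n: "norm (\<xi> - c0) = 1/4" using \<xi> by (simp add: dist_norm norm_minus_commute)
    show ?thesis unfolding n by (simp add: power2_eq_square)
  qed
  finally have S: "Sf \<xi> = 1/16" .
  have "Hb' m w (Sf \<xi>) = - m" unfolding Hb'_def S by (simp add: sg'_0)
  moreover have "(\<chi> i. 2 * (frac (\<xi>$i) - 1/2)) = 2 *\<^sub>R (\<xi> - c0)"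
    by (simp add: vec_eq_iff sphere_frac[OF \<xi>] c0_def algebra_simps)
  ultimately show ?thesis by (simp add: gbump_def)
qed

lemma gbump_cube:
  assumes m: "0 < m" and w: "0 < w" "w \<le> 1/16" and x: "x \<in> cbox 0 (1::real^'n)"
    and nz: "gbump m w x \<noteq> 0"
  shows "x \<in> cball c0 (sqrt (1/16 + w)) - ball c0 (sqrt (1/16 - w))" "norm (gbump m w x) \<le> 2 * m"
proof -
  have h: "Hb' m w (Sf x) \<noteq> 0" using nz by (auto simp: gbump_def)
  then have "\<not> ((Sf x - 1/16) / w \<ge> 1 \<or> (Sf x - 1/16) / w \<le> -1)"
    using sg'_zero[of "(Sf x - 1/16) / w"] by (auto simp: Hb'_def)
  then have u: "\<bar>(Sf x - 1/16) / w\<bar> < 1" by (auto simp: abs_less_iff)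
  then have S1: "Sf x < 1/16 + w" "Sf x > 1/16 - w" using w by (auto simp: abs_less_iff field_simps)
  have x01: "0 \<le> x$i \<and> x$i \<le> 1" for i using x by (simp add: mem_box_cart)
  have xl1: "x$i < 1" for i
  proof (rule ccontr)
    assume "\<not> x$i < 1"
    then have "x$i = 1" using x01[of i] by simp
    then have "(frac (x$i) - 1/2)^2 = 1/4" by (simp add: power2_eq_square)
    moreover have "(frac (x$i) - 1/2)^2 \<le> Sf x" unfolding Sf_def by (rule member_le_sum) auto
    ultimately show False using S1 w by linarith
  qed
  have fr: "frac (x$i) = x$i" for i using x01[of i] xl1[of i] by (intro frac_eq_id) auto
  have Sx: "Sf x = (norm (x - c0))^2" by (simp add: Sf_def norm2_vec fr c0_def)
  have "norm (x - c0) \<le> sqrt (1/16 + w)" by (rule real_le_rsqrt) (use S1 Sx in linarith)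
  moreover have "sqrt (1/16 - w) \<le> norm (x - c0)" by (rule real_le_lsqrt) (use S1 Sx in auto)
  ultimately show "x \<in> cball c0 (sqrt (1/16 + w)) - ball c0 (sqrt (1/16 - w))"
    by (simp add: dist_norm norm_minus_commute)
  have "norm (x - c0) \<le> 1"
  proof -
    have "(norm (x - c0))^2 \<le> 1^2" using S1 Sx w by simp
    then show ?thesis by (rule power2_le_imp_le) simp
  qed
  moreover have "(\<chi> i. 2 * (frac (x$i) - 1/2)) = 2 *\<^sub>R (x - c0)"
    by (simp add: vec_eq_iff fr c0_def algebra_simps)
  moreover have "\<bar>Hb' m w (Sf x)\<bar> \<le> m" using sg'_bound m by (simp add: Hb'_def abs_mult)
  ultimately have "norm (gbump m w x) = \<bar>Hb' m w (Sf x)\<bar> * (2 * norm (x - c0))"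
    \<open>norm (x - c0) \<le> 1\<close> \<open>\<bar>Hb' m w (Sf x)\<bar> \<le> m\<close>
    by (auto simp: gbump_def)
  moreover have "\<bar>Hb' m w (Sf x)\<bar> * (2 * norm (x - c0)) \<le> m * (2 * 1)"
    using \<open>norm (x - c0) \<le> 1\<close> \<open>\<bar>Hb' m w (Sf x)\<bar> \<le> m\<close> m
    by (intro mult_mono) auto
  ultimately show "norm (gbump m w x) \<le> 2 * m" by simp
qed

lemma C1_const: "C1_fun (\<lambda>x. c)"
  unfolding C1_fun_def
proof (intro exI conjI allI)
  fix x :: "real^'a"
  have "(\<lambda>h::real^'a. (0::real^'a) \<bullet> h) = (\<lambda>h. 0)" by simp
  then show "((\<lambda>x. c) has_derivative (\<lambda>h. (\<lambda>x. 0) x \<bullet> h)) (at x)"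
    using has_derivative_const[of c "at x"] by simp
qed simp

lemma C1_add: "C1_fun f \<Longrightarrow> C1_fun g \<Longrightarrow> C1_fun (\<lambda>x. f x + g x)"
  unfolding C1_fun_def
proof (elim exE conjE)
  fix F G assume f: "\<forall>x. (f has_derivative (\<bullet>) (F x)) (at x)" "continuous_on UNIV F"
    and g: "\<forall>x. (g has_derivative (\<bullet>) (G x)) (at x)" "continuous_on UNIV G"
  show "\<exists>H. (\<forall>x. ((\<lambda>x. f x + g x) has_derivative (\<lambda>h. H x \<bullet> h)) (at x)) \<and> continuous_on UNIV H"
  proof (intro exI conjI allI)
    fix x show "((\<lambda>x. f x + g x) has_derivative (\<lambda>h. (F x + G x) \<bullet> h)) (at x)"
      using has_derivative_add[OF f(1)[rule_format, of x] g(1)[rule_format, of x]]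
      by (simp add: inner_add_left)
  qed (intro continuous_intros f g)
qed

lemma C1_mult: "C1_fun f \<Longrightarrow> C1_fun g \<Longrightarrow> C1_fun (\<lambda>x. f x * g x)"
  unfolding C1_fun_def
proof (elim exE conjE)
  fix F G assume f: "\<forall>x. (f has_derivative (\<bullet>) (F x)) (at x)" "continuous_on UNIV F"
    and g: "\<forall>x. (g has_derivative (\<bullet>) (G x)) (at x)" "continuous_on UNIV G"
  have cf: "continuous_on UNIV f" using f(1)
    by (meson has_derivative_continuous_on has_derivative_at_withinI)
  have cg: "continuous_on UNIV g" using g(1)
    by (meson has_derivative_continuous_on has_derivative_at_withinI)
  show "\<exists>H. (\<forall>x. ((\<lambda>x. f x * g x) has_derivative (\<lambda>h. H x \<bullet> h)) (at x)) \<and> continuous_on UNIV H"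
  proof (intro exI conjI allI)
    fix x show "((\<lambda>x. f x * g x) has_derivative (\<lambda>h. (f x *\<^sub>R G x + g x *\<^sub>R F x) \<bullet> h)) (at x)"
      using has_derivative_mult[OF f(1)[rule_format, of x] g(1)[rule_format, of x]]
      by (simp add: inner_add_left algebra_simps)
  qed (intro continuous_intros f g cf cg)
qed

definition Pm :: "real^'n \<Rightarrow> ((real^'n) \<times> (real^'n))" where
  "Pm x = ((\<chi> i. cos (2*pi*x$i)), (\<chi> i. sin (2*pi*x$i)))"

lemma Pm_cont: "continuous_on UNIV Pm"
  unfolding Pm_def[abs_def] by (intro continuous_intros)

lemma Pm_periodic: "int_vector z \<Longrightarrow> Pm (x + z) = Pm x"
proof -
  assume z: "int_vector z"
  have "sin (2*pi*(x+z)$i) = sin (2*pi*x$i) \<and> cos (2*pi*(x+z)$i) = cos (2*pi*x$i)" for i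
  proof -
    obtain k where k: "z$i = of_int k" using z unfolding int_vector_def by (meson Ints_cases)
    show ?thesis unfolding sin_cos_eq_iff by (rule exI[where x=k]) (simp add: k algebra_simps)
  qed
  then show ?thesis by (simp add: Pm_def vec_eq_iff)
qed

lemma Pm_eq: "Pm x = Pm y \<Longrightarrow> int_vector (y - x)"
proof -
  assume e: "Pm x = Pm y"
  have "y$i - x$i \<in> \<int>" for i
  proof -
    have "sin (2*pi*y$i) = sin (2*pi*x$i) \<and> cos (2*pi*y$i) = cos (2*pi*x$i)"
      using e by (auto simp: Pm_def vec_eq_iff)
    then obtain n :: int where "2*pi*y$i = 2*pi*x$i + 2*pi*n" unfolding sin_cos_eq_iff by blast
    then have "pi * (2 * y$i) = pi * (2 * (x$i + n))" by (simp add: algebra_simps)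
    then have "y$i = x$i + n" by simp
    then show ?thesis by simp
  qed
  then show ?thesis by (simp add: int_vector_def)
qed

lemma Pm_in: "Pm x \<in> Pm ` cbox 0 (1::real^'n)"
proof -
  define x' where "x' = (\<chi> i. frac (x$i))"
  have "x' \<in> cbox 0 1" by (auto simp: x'_def mem_box_cart less_imp_le[OF frac_lt_1])
  moreover have "int_vector (x - x')" by (simp add: int_vector_def x'_def frac_def)
  then have "Pm x = Pm x'" using Pm_periodic[of "x - x'" x'] by simp
  ultimately show ?thesis by blast
qed

lemma C1_cos: "C1_fun (\<lambda>x::real^'n. cos (2*pi*x$i))"
  unfolding C1_fun_def
proof (intro exI conjI allI)
  fix x :: "real^'n"
  show "((\<lambda>x::real^'n. cos (2*pi*x$i)) has_derivative (\<lambda>h. ((- sin (2*pi*x$i) * (2*pi)) *\<^sub>R axis i 1) \<bullet> h)) (at x)"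
    by (auto intro!: derivative_eq_intros bounded_linear_imp_has_derivative[OF bounded_linear_vec_nth]
        simp: inner_axis' algebra_simps)
  show "continuous_on UNIV (\<lambda>x::real^'n. (- sin (2*pi*x$i) * (2*pi)) *\<^sub>R axis i (1::real))"
    by (intro continuous_intros)
qed

lemma C1_sin: "C1_fun (\<lambda>x::real^'n. sin (2*pi*x$i))"
  unfolding C1_fun_def
proof (intro exI conjI allI)
  fix x :: "real^'n"
  show "((\<lambda>x::real^'n. sin (2*pi*x$i)) has_derivative (\<lambda>h. ((cos (2*pi*x$i) * (2*pi)) *\<^sub>R axis i 1) \<bullet> h)) (at x)"
    by (auto intro!: derivative_eq_intros bounded_linear_imp_has_derivative[OF bounded_linear_vec_nth]
        simp: inner_axis' algebra_simps)
  show "continuous_on UNIV (\<lambda>x::real^'n. (cos (2*pi*x$i) * (2*pi)) *\<^sub>R axis i (1::real))"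
    by (intro continuous_intros)
qed

lemma torus_approx:
  fixes a :: "real^'n \<Rightarrow> real"
  assumes a: "C0_torus \<Lambda> a" and e: "e > 0"
  shows "\<exists>b. C1_fun b \<and> periodic b \<and> (\<forall>x. \<bar>a x - b x\<bar> < e)"
proof -
  from a have ca: "continuous_on UNIV a" and pa: "periodic a" and ra: "\<And>x. 1 \<le> a x \<and> a x \<le> \<Lambda>"
    unfolding C0_torus_def by auto
  define T where "T = Pm ` cbox 0 (1::real^'n)"
  have cT: "compact T" unfolding T_def
    by (intro compact_continuous_image continuous_on_subset[OF Pm_cont]) auto
  define F where "F y = a (SOME x. Pm x = y)" for y
  have FP: "F (Pm x) = a x" for x
  proof -
    have "Pm (SOME x'. Pm x' = Pm x) = Pm x" by (rule someI[of "\<lambda>x'. Pm x' = Pm x" x]) simp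
    then have "int_vector ((SOME x'. Pm x' = Pm x) - x)" by (intro Pm_eq) simp
    then have "a (x + ((SOME x'. Pm x' = Pm x) - x)) = a x" using pa unfolding periodic_def by blast
    then show ?thesis by (simp add: F_def)
  qed
  have contF: "continuous_on T F"
  proof (rule continuous_from_closed_graph[of "{1..\<Lambda>}"])
    show "compact {1..\<Lambda>}" by simp
    show "F \<in> T \<rightarrow> {1..\<Lambda>}" using ra FP by (auto simp: T_def)
    have "(\<lambda>y. (y, F y)) ` T = (\<lambda>x. (Pm x, a x)) ` cbox 0 1"
      unfolding T_def image_image FP ..
    moreover have "compact ((\<lambda>x. (Pm x, a x)) ` cbox 0 (1::real^'n))"
      by (intro compact_continuous_image continuous_on_Pair continuous_on_subset[OF Pm_cont]
          continuous_on_subset[OF ca]) auto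
    ultimately show "closed ((\<lambda>y. (y, F y)) ` T)" by (simp add: compact_imp_closed)
  qed
  define P where "P g = (continuous_on T g \<and> C1_fun (\<lambda>x. g (Pm x)))" for g :: "(real^'n) \<times> (real^'n) \<Rightarrow> real"
  have "\<exists>g. P g \<and> (\<forall>x\<in>T. \<bar>F x - g x\<bar> < e)"
  proof (rule Stone_Weierstrass_HOL[OF cT _ _ _ _ _ contF e])
    show "P (\<lambda>x. c)" for c by (simp add: P_def C1_const)
    show "P f \<Longrightarrow> continuous_on T f" for f by (simp add: P_def)
    show "P f \<and> P g \<Longrightarrow> P (\<lambda>x. f x + g x)" for f g
      by (auto simp: P_def intro: continuous_intros C1_add)
    show "P f \<and> P g \<Longrightarrow> P (\<lambda>x. f x * g x)" for f g
      by (auto simp: P_def intro: continuous_intros C1_mult)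
    show "\<exists>f. P f \<and> f x \<noteq> f y" if "x \<in> T \<and> y \<in> T \<and> x \<noteq> y" for x y
    proof -
      from that have "fst x \<noteq> fst y \<or> snd x \<noteq> snd y" by (auto simp: prod_eq_iff)
      then obtain i where "fst x $ i \<noteq> fst y $ i \<or> snd x $ i \<noteq> snd y $ i" by (auto simp: vec_eq_iff)
      then show ?thesis
      proof
        assume "fst x $ i \<noteq> fst y $ i"
        moreover have "P (\<lambda>y. fst y $ i)"
          using C1_cos[of i] by (auto simp: P_def Pm_def intro!: continuous_intros)
        ultimately show ?thesis by blast
      next
        assume "snd x $ i \<noteq> snd y $ i"
        moreover have "P (\<lambda>y. snd y $ i)"
          using C1_sin[of i] by (auto simp: P_def Pm_def intro!: continuous_intros)
        ultimately show ?thesis by blast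
      qed
    qed
  qed
  then obtain g where g: "P g" "\<And>y. y \<in> T \<Longrightarrow> \<bar>F y - g y\<bar> < e" by blast
  show ?thesis
  proof (intro exI conjI allI)
    show "C1_fun (\<lambda>x. g (Pm x))" using g(1) by (simp add: P_def)
    show "periodic (\<lambda>x. g (Pm x))" by (simp add: periodic_def Pm_periodic)
    fix x show "\<bar>a x - g (Pm x)\<bar> < e" using g(2)[of "Pm x"] Pm_in[of x] by (simp add: T_def FP)
  qed
qed

lemma mat2: "mat 2 *v h = (2::real) *\<^sub>R (h::real^'n)"
proof -
  have "(\<Sum>j\<in>UNIV. (if i = j then 2 else 0) * h $ j) = 2 * h $ i" for i :: 'n
  proof -
    have "(\<Sum>j\<in>UNIV. (if i = j then 2 else 0) * h $ j) = (\<Sum>j\<in>UNIV. if i = j then 2 * h $ j else 0)"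
      by (rule sum.cong) auto
    then show ?thesis by simp
  qed
  then show ?thesis by (simp add: vec_eq_iff matrix_vector_mult_def mat_def)
qed

lemma ball_C2:
  fixes c :: "real^'n"
  assumes r: "r > 0"
  shows "C2_defining (\<lambda>x. (x - c) \<bullet> (x - c) - r^2) (ball c r)"
proof -
  have d1: "((\<lambda>x. (x - c) \<bullet> (x - c) - r^2) has_derivative (\<lambda>h. (2 *\<^sub>R (x - c)) \<bullet> h)) (at x)" for x
    by (auto intro!: derivative_eq_intros simp: inner_commute algebra_simps)
  have d2: "((\<lambda>x. 2 *\<^sub>R (x - c)) has_derivative (\<lambda>h. mat 2 *v h)) (at x)" for x
    by (auto intro!: derivative_eq_intros simp: mat2)
  have C2: "C2_fun (\<lambda>x. (x - c) \<bullet> (x - c) - r^2)"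
    unfolding C2_fun_def
    by (rule exI[where x="\<lambda>x. 2 *\<^sub>R (x - c)"], rule exI[where x="\<lambda>x. mat 2"])
      (intro conjI allI d1 d2 continuous_on_const)
  have "ball c r = {x. (x - c) \<bullet> (x - c) - r^2 < 0}"
  proof -
    have "dist c x < r \<longleftrightarrow> (x - c) \<bullet> (x - c) < r^2" for x
    proof -
      have "(x - c) \<bullet> (x - c) = (norm (x - c))^2" by (simp add: power2_norm_eq_inner)
      moreover have "norm (x - c) < r \<longleftrightarrow> (norm (x - c))^2 < r^2"
        using power_mono_iff[of r "norm (x - c)" 2] r by (meson not_le norm_ge_zero less_imp_le zero_less_numeral)
      ultimately show ?thesis by (simp add: dist_norm norm_minus_commute)
    qed
    then show ?thesis by (simp add: set_eq_iff)
  qed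
  moreover have "grad (\<lambda>x. (x - c) \<bullet> (x - c) - r^2) x \<noteq> 0" if "(x - c) \<bullet> (x - c) - r^2 = 0" for x
  proof -
    have "x \<noteq> c"
    proof
      assume "x = c" then show False using that r by simp
    qed
    then show ?thesis using grad_eq[OF d1] by simp
  qed
  ultimately show ?thesis using C2 unfolding C2_defining_def by auto
qed

lemma ball_C2_boundary: "r > 0 \<Longrightarrow> C2_boundary (ball (c::real^'n) r)"
  using ball_C2 by (auto simp: C2_boundary_def)

lemma ball_geom:
  fixes c :: "real^'n"
  assumes r: "r > 0" and \<xi>: "\<xi> \<in> sphere c r"
  shows "outward_normal (ball c r) \<xi> = (\<xi> - c) /\<^sub>R r"
    "mean_curvature (ball c r) \<xi> = (real CARD('n) - 1) / r"
    "C2_boundary (ball c r)"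
proof -
  have ex: "\<exists>\<phi>. C2_defining \<phi> (ball c r)" using ball_C2[OF r] by blast
  define \<phi> where "\<phi> = (SOME \<phi>. C2_defining \<phi> (ball c r))"
  have "C2_defining \<phi> (ball c r)" unfolding \<phi>_def by (rule someI_ex[OF ex])
  note bn = ball_normal_curv[OF r this \<xi>]
  show "outward_normal (ball c r) \<xi> = (\<xi> - c) /\<^sub>R r"
    unfolding outward_normal_def Let_def \<phi>_def[symmetric] by (rule bn(1))
  show "mean_curvature (ball c r) \<xi> = (real CARD('n) - 1) / r"
    unfolding mean_curvature_def Let_def \<phi>_def[symmetric] by (rule bn(2))
  show "C2_boundary (ball c r)" using ex by (simp add: C2_boundary_def)
qed

lemma assemble:
  fixes b :: "real^'n \<Rightarrow> real" and gb :: "real^'n \<Rightarrow> real^'n"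
  assumes db: "\<And>x. (b has_derivative (\<lambda>h. gb x \<bullet> h)) (at x)" and cg: "continuous_on UNIV gb"
    and pb: "periodic b" and rb: "\<And>x. 1 + \<eta> \<le> b x \<and> b x \<le> \<Lambda> - \<eta>"
    and M: "\<And>x. x \<in> sphere c0 (1/4) \<Longrightarrow> norm (gb x) \<le> M" and M0: "M \<ge> 0"
    and m: "m = 2 * (4 * \<Lambda> * (real CARD('n) - 1) + M + 1)"
    and w: "0 < w" "w \<le> 1/16" "m * w \<le> \<eta>" and L: "\<Lambda> \<ge> 1"
  shows "C1_torus \<Lambda> (\<lambda>x. b x + bump m w x)"
    "strict_stat_subsol (\<lambda>x. b x + bump m w x) (ball c0 (1/4))"
    "C2_boundary (ball (c0::real^'n) (1/4))"
proof -
  have card: "real CARD('n) - 1 \<ge> 0" by simp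
  have m0: "m > 0" using m M0 L card by (simp add: add_nonneg_pos)
  have da: "((\<lambda>x. b x + bump m w x) has_derivative (\<lambda>h. (gb x + gbump m w x) \<bullet> h)) (at x)" for x
    using has_derivative_add[OF db bump_deriv[OF w(1,2)]] by (simp add: inner_add_left)
  have ga: "grad (\<lambda>x. b x + bump m w x) x = gb x + gbump m w x" for x by (rule grad_eq[OF da])
  have rng: "1 \<le> b x + bump m w x \<and> b x + bump m w x \<le> \<Lambda>" for x
    using rb[of x] bump_range[OF m0 w(1), of x] w(3) by auto
  show "C1_torus \<Lambda> (\<lambda>x. b x + bump m w x)"
    unfolding C1_torus_def C1_fun_def
  proof (intro conjI)
    show "\<exists>g. (\<forall>x. ((\<lambda>x. b x + bump m w x) has_derivative (\<lambda>h. g x \<bullet> h)) (at x)) \<and> continuous_on UNIV g"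
      by (rule exI[where x="\<lambda>x. gb x + gbump m w x"])
        (intro conjI allI da continuous_intros cg gbump_cont[OF w(1,2)])
    show "periodic (\<lambda>x. b x + bump m w x)"
      using pb bump_periodic[of m w] by (simp add: periodic_def)
    show "\<forall>x. 1 \<le> b x + bump m w x \<and> b x + bump m w x \<le> \<Lambda>" using rng by blast
  qed
  show "C2_boundary (ball (c0::real^'n) (1/4))" by (rule ball_C2_boundary) simp
  show "strict_stat_subsol (\<lambda>x. b x + bump m w x) (ball c0 (1/4))"
    unfolding strict_stat_subsol_def
  proof
    fix \<xi> :: "real^'n" assume "\<xi> \<in> frontier (ball c0 (1/4))"
    then have \<xi>: "\<xi> \<in> sphere c0 (1/4)" by simp
    define v where "v = \<xi> - c0"
    have nv: "norm v = 1/4" using \<xi> by (simp add: v_def dist_norm norm_minus_commute)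
    have vv: "v \<bullet> v = 1/16"
    proof -
      have "v \<bullet> v = (norm v)^2" by (simp add: power2_norm_eq_inner)
      then show ?thesis unfolding nv by (simp add: power2_eq_square)
    qed
    have mc: "mean_curvature (ball c0 (1/4)) \<xi> = 4 * (real CARD('n) - 1)"
      using ball_geom(2)[of "1/4" \<xi> c0] \<xi> by simp
    have on: "outward_normal (ball c0 (1/4)) \<xi> = 4 *\<^sub>R v"
      using ball_geom(1)[of "1/4" \<xi> c0] \<xi> by (simp add: v_def)
    have gbx: "gbump m w \<xi> = (-2 * m) *\<^sub>R v" using gbump_sphere[OF w(1) \<xi>] by (simp add: v_def)
    have "\<bar>gb \<xi> \<bullet> v\<bar> \<le> norm (gb \<xi>) * norm v" by (rule Cauchy_Schwarz_ineq2)
    then have cs: "\<bar>4 * (gb \<xi> \<bullet> v)\<bar> \<le> M" using M[OF \<xi>] nv by (simp add: abs_mult)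
    have inner_eq: "grad (\<lambda>x. b x + bump m w x) \<xi> \<bullet> outward_normal (ball c0 (1/4)) \<xi>
        = 4 * (gb \<xi> \<bullet> v) - m / 2"
      unfolding ga on gbx by (simp add: inner_add_left vv algebra_simps)
    define D where "D = real CARD('n) - 1"
    define X where "X = b \<xi> + bump m w \<xi>"
    define g where "g = gb \<xi> \<bullet> v"
    have h1: "X * D \<le> \<Lambda> * D"
      using rng[of \<xi>] card unfolding X_def D_def by (intro mult_right_mono) auto
    have h2: "4 * g \<le> M" using cs unfolding g_def by (simp add: abs_le_iff)
    have key: "- X * (4 * D) - (4 * g - m / 2) = 4 * (\<Lambda> * D - X * D) + (M - 4 * g) + 1"
      unfolding m D_def by (simp add: field_simps)
    have "0 \<le> \<Lambda> * D - X * D" using h1 by simp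
    moreover have "0 \<le> M - 4 * g" using h2 by simp
    ultimately have "- X * (4 * D) - (4 * g - m / 2) > 0" unfolding key by simp
    then show "- (b \<xi> + bump m w \<xi>) * mean_curvature (ball c0 (1/4)) \<xi>
        - grad (\<lambda>x. b x + bump m w x) \<xi> \<bullet> outward_normal (ball c0 (1/4)) \<xi> > 0"
      unfolding mc inner_eq X_def g_def D_def by simp
  qed
qed

lemma cube_ne: "cbox 0 (1::real^'n) \<noteq> {}"
proof -
  have "(0::real^'n) \<in> cbox 0 1" by (simp add: mem_box_cart)
  then show ?thesis by blast
qed

lemma cube_content: "measure lborel (cbox 0 (1::real^'n)) = 1"
  using content_cbox_cart[OF cube_ne] by simp

lemma meas_cball: "r \<ge> 0 \<Longrightarrow> measure lebesgue (cball (c::real^'n) r) = unit_ball_vol (real CARD('n)) * r ^ CARD('n)"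
  using content_cball[of r c] by (simp add: measure_completion borel_closed)

lemma meas_ball: "r \<ge> 0 \<Longrightarrow> measure lebesgue (ball (c::real^'n) r) = unit_ball_vol (real CARD('n)) * r ^ CARD('n)"
  using content_ball[of r c] by (simp add: measure_completion borel_open)

lemma powr_sum2:
  fixes x y p :: real
  assumes "0 \<le> x" "0 \<le> y" "0 \<le> p"
  shows "(x + y) powr p \<le> (2 * x) powr p + (2 * y) powr p"
proof (cases "x \<le> y")
  case True
  then have "(x + y) powr p \<le> (2 * y) powr p" using assms by (intro powr_mono2) auto
  then show ?thesis by (smt (verit) powr_ge_zero)
next
  case False
  then have "(x + y) powr p \<le> (2 * x) powr p" using assms by (intro powr_mono2) auto
  then show ?thesis by (smt (verit) powr_ge_zero)
qed

lemma sphere_sub_cube: "sphere (c0::real^'n) (1/4) \<subseteq> cbox 0 1"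
proof
  fix \<xi> :: "real^'n" assume \<xi>: "\<xi> \<in> sphere c0 (1/4)"
  have "\<bar>\<xi>$i - 1/2\<bar> \<le> 1/4" for i
    using component_le_norm_cart[of "\<xi> - c0" i] \<xi> by (simp add: dist_norm norm_minus_commute c0_def)
  then have "0 \<le> \<xi>$i \<and> \<xi>$i \<le> 1" for i using abs_le_iff[of "\<xi>$i - 1/2" "1/4"] by force
  then show "\<xi> \<in> cbox 0 1" unfolding mem_box_cart by simp
qed

lemma ball_props: "ball (c0::real^'n) (1/4) \<noteq> {} \<and> bounded (ball (c0::real^'n) (1/4)) \<and> open (ball (c0::real^'n) (1/4))"
proof (intro conjI)
  show "ball (c0::real^'n) (1/4) \<noteq> {}" using centre_in_ball[of c0 "1/4::real"] by auto
qed (rule bounded_ball, rule open_ball)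

lemma sup_dist_le: "(\<And>x. \<bar>f x - g x\<bar> \<le> \<delta>) \<Longrightarrow> sup_dist f g \<le> \<delta>"
  unfolding sup_dist_def by (rule cSUP_least) auto

lemma conj1:
  fixes a :: "real^'n \<Rightarrow> real"
  assumes L: "\<Lambda> > 1" and a: "C0_torus \<Lambda> a" and \<delta>: "\<delta> > 0"
  shows "\<exists>a\<^sub>\<delta> (\<Omega> :: (real^'n) set). C1_torus \<Lambda> a\<^sub>\<delta> \<and> sup_dist a a\<^sub>\<delta> \<le> \<delta> \<and>
               \<Omega> \<noteq> {} \<and> bounded \<Omega> \<and> open \<Omega> \<and> C2_boundary \<Omega> \<and> strict_stat_subsol a\<^sub>\<delta> \<Omega>"
proof -
  have ra: "\<And>x. 1 \<le> a x \<and> a x \<le> \<Lambda>" using a by (simp add: C0_torus_def)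
  define e where "e = \<delta>/4"
  have e: "e > 0" using \<delta> by (simp add: e_def)
  obtain b0 where b0: "C1_fun b0" "periodic b0" "\<And>x. \<bar>a x - b0 x\<bar> < e"
    using torus_approx[OF a e] by blast
  obtain gb0 where db0: "\<And>x. (b0 has_derivative (\<lambda>h. gb0 x \<bullet> h)) (at x)" and cgb0: "continuous_on UNIV gb0"
    using b0(1) unfolding C1_fun_def by blast
  obtain B where B: "B \<ge> 0" "\<And>x. x \<in> sphere (c0::real^'n) (1/4) \<Longrightarrow> norm (gb0 x) \<le> B"
    using continuous_on_compact_bound[OF compact_sphere continuous_on_subset[OF cgb0 subset_UNIV]] by blast
  define Lh where "Lh = (\<Lambda> - 1)/2"
  define c where "c = (1 + \<Lambda>)/2"
  have Lh: "Lh > 0" using L by (simp add: Lh_def)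
  have cL: "c - Lh = 1" "c + Lh = \<Lambda>" by (simp_all add: c_def Lh_def field_simps)
  define \<theta> where "\<theta> = min (1/2) (\<delta>/(4*Lh))"
  have \<theta>: "0 < \<theta>" "\<theta> \<le> 1/2" using \<delta> Lh by (simp_all add: \<theta>_def)
  have \<theta>3: "\<theta> * Lh \<le> \<delta>/4"
  proof -
    have "\<theta> \<le> \<delta>/(4*Lh)" by (simp add: \<theta>_def)
    then have "\<theta> * Lh \<le> \<delta>/(4*Lh) * Lh" using Lh by (intro mult_right_mono) auto
    then show ?thesis using Lh by simp
  qed
  define \<kappa> where "\<kappa> = (1 - \<theta>) * Lh / (Lh + e)"
  have \<kappa>: "0 \<le> \<kappa>" "\<kappa> \<le> 1" "\<kappa> * (Lh + e) = (1 - \<theta>) * Lh"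
    using \<theta> Lh e by (auto simp: \<kappa>_def field_simps)
  define b where "b x = c + \<kappa> * (b0 x - c)" for x
  define gb where "gb x = \<kappa> *\<^sub>R gb0 x" for x
  have db: "(b has_derivative (\<lambda>h. gb x \<bullet> h)) (at x)" for x
  proof -
    have d1: "((\<lambda>x. b0 x - c) has_derivative (\<lambda>h. gb0 x \<bullet> h - 0)) (at x)"
      by (rule has_derivative_diff[OF db0 has_derivative_const])
    have d2: "((\<lambda>x. \<kappa> * (b0 x - c)) has_derivative (\<lambda>h. \<kappa> * (gb0 x \<bullet> h - 0))) (at x)"
      by (rule has_derivative_mult_right[OF d1])
    have "((\<lambda>x. c + \<kappa> * (b0 x - c)) has_derivative (\<lambda>h. 0 + \<kappa> * (gb0 x \<bullet> h - 0))) (at x)"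
      by (rule has_derivative_add[OF has_derivative_const d2])
    then show ?thesis by (simp add: b_def[abs_def] gb_def)
  qed
  have cgb: "continuous_on UNIV gb" unfolding gb_def[abs_def] by (intro continuous_intros cgb0)
  have pb: "periodic b" using b0(2) by (simp add: periodic_def b_def)
  define \<eta> where "\<eta> = \<theta> * Lh"
  have \<eta>: "\<eta> > 0" using \<theta> Lh by (simp add: \<eta>_def)
  have bc: "\<bar>b0 x - c\<bar> < Lh + e" for x
    using ra[of x] b0(3)[of x] cL by (simp add: abs_less_iff abs_le_iff)
  have bc2: "\<bar>b x - c\<bar> \<le> (1 - \<theta>) * Lh" for x
  proof -
    have "\<bar>b x - c\<bar> = \<kappa> * \<bar>b0 x - c\<bar>" using \<kappa>(1) by (simp add: b_def abs_mult)
    also have "\<dots> \<le> \<kappa> * (Lh + e)" using bc[of x] \<kappa>(1) by (intro mult_left_mono) auto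
    finally show ?thesis using \<kappa>(3) by simp
  qed
  have rb: "1 + \<eta> \<le> b x \<and> b x \<le> \<Lambda> - \<eta>" for x
  proof -
    note h = abs_le_iff[THEN iffD1, OF bc2[of x]]
    have "(1 - \<theta>) * Lh = Lh - \<theta> * Lh" by (simp add: algebra_simps)
    then show ?thesis using h cL unfolding \<eta>_def by linarith
  qed
  have Mb: "norm (gb x) \<le> B" if "x \<in> sphere c0 (1/4)" for x
  proof -
    have "norm (gb x) = \<kappa> * norm (gb0 x)" using \<kappa>(1) by (simp add: gb_def)
    also have "\<dots> \<le> 1 * B" using B(2)[OF that] \<kappa> B(1) by (intro mult_mono) auto
    finally show ?thesis by simp
  qed
  define m where "m = 2 * (4 * \<Lambda> * (real CARD('n) - 1) + B + 1)"
  have m0: "m > 0" using L B(1) by (simp add: m_def add_nonneg_pos)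
  define w where "w = min (1/16) (\<eta> / m)"
  have w: "0 < w" "w \<le> 1/16" "m * w \<le> \<eta>"
  proof -
    show "0 < w" using \<eta> m0 by (simp add: w_def)
    show "w \<le> 1/16" unfolding w_def by (rule min.cobounded1)
    have "w \<le> \<eta> / m" unfolding w_def by (rule min.cobounded2)
    then have "m * w \<le> m * (\<eta> / m)" using m0 by (intro mult_left_mono) auto
    then show "m * w \<le> \<eta>" using m0 by simp
  qed
  have L1: "\<Lambda> \<ge> 1" using L by simp
  note A = assemble[OF db cgb pb rb Mb B(1) m_def w L1]
  have pt: "\<bar>a x - (b x + bump m w x)\<bar> \<le> \<delta>" for x
  proof -
    have br: "0 \<le> bump m w x \<and> bump m w x \<le> m * w" by (rule bump_range[OF m0 w(1)])
    have "b0 x - b x = (1 - \<kappa>) * (b0 x - c)" by (simp add: b_def algebra_simps)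
    then have "\<bar>b0 x - b x\<bar> = (1 - \<kappa>) * \<bar>b0 x - c\<bar>" using \<kappa>(2) by (simp add: abs_mult)
    also have "\<dots> \<le> (1 - \<kappa>) * (Lh + e)" using bc[of x] \<kappa>(2) by (intro mult_left_mono) auto
    also have "\<dots> = e + \<theta> * Lh" using \<kappa>(3) by (simp add: algebra_simps)
    finally have "\<bar>b0 x - b x\<bar> \<le> e + \<theta> * Lh" .
    note h1 = abs_le_iff[THEN iffD1, OF this]
    note h2 = abs_less_iff[THEN iffD1, OF b0(3)[of x]]
    show ?thesis unfolding abs_le_iff using h1 h2 br w(3) \<theta>3 unfolding e_def \<eta>_def by linarith
  qed
  show ?thesis
  proof (intro exI conjI)
    show "C1_torus \<Lambda> (\<lambda>x. b x + bump m w x)" by (rule A(1))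
    show "sup_dist a (\<lambda>x. b x + bump m w x) \<le> \<delta>" by (rule sup_dist_le) (rule pt)
    show "strict_stat_subsol (\<lambda>x. b x + bump m w x) (ball c0 (1/4))" by (rule A(2))
    show "C2_boundary (ball (c0::real^'n) (1/4))" by (rule A(3))
  qed (use ball_props in auto)
qed

lemma cball_sub_cube: "R \<le> 1/2 \<Longrightarrow> cball (c0::real^'n) R \<subseteq> cbox 0 1"
proof
  fix \<xi> :: "real^'n" assume R: "R \<le> 1/2" and \<xi>: "\<xi> \<in> cball c0 R"
  have "\<bar>\<xi>$i - 1/2\<bar> \<le> 1/2" for i
    using component_le_norm_cart[of "\<xi> - c0" i] \<xi> R by (simp add: dist_norm norm_minus_commute c0_def)
  then have "0 \<le> \<xi>$i \<and> \<xi>$i \<le> 1" for i using abs_le_iff[of "\<xi>$i - 1/2" "1/2"] by force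
  then show "\<xi> \<in> cbox 0 1" unfolding mem_box_cart by simp
qed

lemma four_powr: "p \<ge> 1 \<Longrightarrow> 2 * ((\<delta>::real) / 4) powr p \<le> \<delta> powr p / 2"
proof -
  assume p: "p \<ge> 1"
  have "(4::real) powr 1 \<le> 4 powr p" using p by (intro powr_mono) auto
  then have f: "4 \<le> (4::real) powr p" by simp
  have "2 * (\<delta> / 4) powr p = 2 * (\<delta> powr p / 4 powr p)" by (simp add: powr_divide)
  also have "\<dots> \<le> 2 * (\<delta> powr p / 4)"
    using f by (intro mult_left_mono divide_left_mono) auto
  finally show ?thesis by simp
qed

lemma conj2:
  fixes a :: "real^'n \<Rightarrow> real"
  assumes L: "\<Lambda> > 1" and a: "C2_torus \<Lambda> a" and \<delta>: "\<delta> > 0" and p: "p \<ge> 1"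
  shows "\<exists>a\<^sub>\<delta> (\<Omega> :: (real^'n) set). C1_torus \<Lambda> a\<^sub>\<delta> \<and> sup_dist a a\<^sub>\<delta> \<le> \<delta> \<and>
               W1p_norm p (\<lambda>x. a x - a\<^sub>\<delta> x) \<le> \<delta> \<and>
               \<Omega> \<noteq> {} \<and> bounded \<Omega> \<and> open \<Omega> \<and> C2_boundary \<Omega> \<and> strict_stat_subsol a\<^sub>\<delta> \<Omega>"
proof -
  have ra: "\<And>x. 1 \<le> a x \<and> a x \<le> \<Lambda>" and pa: "periodic a" and C2: "C2_fun a"
    using a by (auto simp: C2_torus_def)
  obtain ga H where da: "\<And>x. (a has_derivative (\<lambda>h. ga x \<bullet> h)) (at x)"
    and dga: "\<And>x. (ga has_derivative (\<lambda>h. H x *v h)) (at x)"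
    using C2 unfolding C2_fun_def by blast
  have cga: "continuous_on UNIV ga"
    using dga by (meson has_derivative_continuous_on has_derivative_at_withinI)
  obtain M where M: "M \<ge> 0" "\<And>x. x \<in> cbox 0 (1::real^'n) \<Longrightarrow> norm (ga x) \<le> M"
    using continuous_on_compact_bound[OF compact_cbox continuous_on_subset[OF cga subset_UNIV]] by blast
  define Lh where "Lh = (\<Lambda> - 1)/2"
  define c where "c = (1 + \<Lambda>)/2"
  have Lh: "Lh > 0" using L by (simp add: Lh_def)
  have cL: "c - Lh = 1" "c + Lh = \<Lambda>" by (simp_all add: c_def Lh_def field_simps)
  define \<theta> where "\<theta> = min (1/2) (\<delta>/(8*(Lh + M + 1)))"
  have \<theta>: "0 < \<theta>" "\<theta> \<le> 1/2"
  proof -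
    show "0 < \<theta>" using \<delta> Lh M by (simp add: \<theta>_def)
    show "\<theta> \<le> 1/2" unfolding \<theta>_def by (rule min.cobounded1)
  qed
  have \<theta>3: "\<theta> * Lh \<le> \<delta>/8" "\<theta> * M \<le> \<delta>/8"
  proof -
    have "\<theta> \<le> \<delta>/(8*(Lh + M + 1))" unfolding \<theta>_def by (rule min.cobounded2)
    then have "\<theta> * (Lh + M + 1) \<le> \<delta>/(8*(Lh + M + 1)) * (Lh + M + 1)"
      using Lh M(1) by (intro mult_right_mono) auto
    moreover have "\<delta>/(8*(Lh + M + 1)) * (Lh + M + 1) = \<delta>/8"
    proof -
      have "Lh + M + 1 > 0" using Lh M(1) by simp
      then show ?thesis by (simp add: field_simps)
    qed
    ultimately have t: "\<theta> * (Lh + M + 1) \<le> \<delta>/8" by (rule ord_le_eq_trans)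
    have "\<theta> * Lh \<le> \<theta> * (Lh + M + 1)" "\<theta> * M \<le> \<theta> * (Lh + M + 1)"
      using \<theta> Lh M(1) by (auto intro!: mult_left_mono)
    then show "\<theta> * Lh \<le> \<delta>/8" "\<theta> * M \<le> \<delta>/8" using t by linarith+
  qed
  define b where "b x = c + (1 - \<theta>) * (a x - c)" for x
  define gb where "gb x = (1 - \<theta>) *\<^sub>R ga x" for x
  have db: "(b has_derivative (\<lambda>h. gb x \<bullet> h)) (at x)" for x
  proof -
    have d1: "((\<lambda>x. a x - c) has_derivative (\<lambda>h. ga x \<bullet> h - 0)) (at x)"
      by (rule has_derivative_diff[OF da has_derivative_const])
    have d2: "((\<lambda>x. (1 - \<theta>) * (a x - c)) has_derivative (\<lambda>h. (1 - \<theta>) * (ga x \<bullet> h - 0))) (at x)"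
      by (rule has_derivative_mult_right[OF d1])
    have "((\<lambda>x. c + (1 - \<theta>) * (a x - c)) has_derivative (\<lambda>h. 0 + (1 - \<theta>) * (ga x \<bullet> h - 0))) (at x)"
      by (rule has_derivative_add[OF has_derivative_const d2])
    then show ?thesis by (simp add: b_def[abs_def] gb_def)
  qed
  have cgb: "continuous_on UNIV gb" unfolding gb_def[abs_def] by (intro continuous_intros cga)
  have pb: "periodic b" using pa by (simp add: periodic_def b_def)
  define \<eta> where "\<eta> = \<theta> * Lh"
  have \<eta>: "\<eta> > 0" using \<theta> Lh by (simp add: \<eta>_def)
  have ac: "\<bar>a x - c\<bar> \<le> Lh" for x
    using ra[of x] cL by (simp add: abs_le_iff)
  have bc2: "\<bar>b x - c\<bar> \<le> (1 - \<theta>) * Lh" for x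
  proof -
    have "\<bar>b x - c\<bar> = (1 - \<theta>) * \<bar>a x - c\<bar>" using \<theta> by (simp add: b_def abs_mult)
    also have "\<dots> \<le> (1 - \<theta>) * Lh" using ac[of x] \<theta> by (intro mult_left_mono) auto
    finally show ?thesis .
  qed
  have rb: "1 + \<eta> \<le> b x \<and> b x \<le> \<Lambda> - \<eta>" for x
  proof -
    note h = abs_le_iff[THEN iffD1, OF bc2[of x]]
    have "(1 - \<theta>) * Lh = Lh - \<theta> * Lh" by (simp add: algebra_simps)
    then show ?thesis using h cL unfolding \<eta>_def by linarith
  qed
  have Mb: "norm (gb x) \<le> M" if "x \<in> sphere c0 (1/4)" for x
  proof -
    have "norm (gb x) = (1 - \<theta>) * norm (ga x)" using \<theta> by (simp add: gb_def)
    also have "\<dots> \<le> 1 * M" using M(2)[OF subsetD[OF sphere_sub_cube that]] \<theta> M(1)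
      by (intro mult_mono) auto
    finally show ?thesis by simp
  qed
  define m where "m = 2 * (4 * \<Lambda> * (real CARD('n) - 1) + M + 1)"
  have m0: "m > 0" using L M(1) by (simp add: m_def add_nonneg_pos)
  define uv where "uv = unit_ball_vol (real CARD('n))"
  define \<phi> where "\<phi> w = (4 * m) powr p * (uv * sqrt (1/16 + w) ^ CARD('n) - uv * sqrt (1/16 - w) ^ CARD('n))" for w
  have "(\<phi> \<longlongrightarrow> (4 * m) powr p * (uv * sqrt (1/16 + 0) ^ CARD('n) - uv * sqrt (1/16 - 0) ^ CARD('n))) (at_right 0)"
    unfolding \<phi>_def by (intro tendsto_intros)
  then have lim: "(\<phi> \<longlongrightarrow> 0) (at_right 0)" by simp
  have "\<delta> powr p / 2 > 0" using \<delta> by simp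
  from order_tendstoD(2)[OF lim this]
  obtain b1 where b1: "b1 > 0" "\<And>y. y > 0 \<Longrightarrow> y < b1 \<Longrightarrow> \<phi> y < \<delta> powr p / 2"
    unfolding eventually_at_right_field by blast
  define w where "w = min (b1/2) (min (1/16) (\<eta> / m))"
  have w: "0 < w" "w \<le> 1/16" "m * w \<le> \<eta>" "w < b1"
  proof -
    show "0 < w" using \<eta> m0 b1 by (simp add: w_def)
    show "w \<le> 1/16" unfolding w_def by (meson min.cobounded1 min.cobounded2 order_trans)
    have "w \<le> \<eta> / m" unfolding w_def by (meson min.cobounded2 order_trans)
    then have "m * w \<le> m * (\<eta> / m)" using m0 by (intro mult_left_mono) auto
    then show "m * w \<le> \<eta>" using m0 by simp
    have "w \<le> b1/2" unfolding w_def by (rule min.cobounded1)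
    then show "w < b1" using b1 by simp
  qed
  have \<phi>w: "\<phi> w < \<delta> powr p / 2" using b1(2) w by simp
  have L1: "\<Lambda> \<ge> 1" using L by simp
  note A = assemble[OF db cgb pb rb Mb M(1) m_def w(1,2,3) L1]
  define f where "f x = a x - (b x + bump m w x)" for x
  have fval: "f x = \<theta> * (a x - c) - bump m w x" for x by (simp add: f_def b_def algebra_simps)
  have df: "(f has_derivative (\<lambda>h. (\<theta> *\<^sub>R ga x - gbump m w x) \<bullet> h)) (at x)" for x
  proof -
    have "(f has_derivative (\<lambda>h. ga x \<bullet> h - (gb x \<bullet> h + gbump m w x \<bullet> h))) (at x)"
      unfolding f_def[abs_def] by (intro has_derivative_diff has_derivative_add da db bump_deriv w(1,2))
    moreover have "(\<lambda>h. ga x \<bullet> h - (gb x \<bullet> h + gbump m w x \<bullet> h)) = (\<lambda>h. (\<theta> *\<^sub>R ga x - gbump m w x) \<bullet> h)"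
      by (rule ext) (simp add: gb_def inner_diff_left algebra_simps)
    ultimately show ?thesis by simp
  qed
  have gf: "grad f x = \<theta> *\<^sub>R ga x - gbump m w x" for x by (rule grad_eq[OF df])
  have br: "0 \<le> bump m w x \<and> bump m w x \<le> m * w" for x by (rule bump_range[OF m0 w(1)])
  have fpt: "\<bar>f x\<bar> \<le> \<delta>/4" for x
  proof -
    have "\<bar>\<theta> * (a x - c)\<bar> \<le> \<theta> * Lh" using ac[of x] \<theta> by (simp add: abs_mult mult_left_mono)
    then show ?thesis unfolding fval using br[of x] w(3) \<theta>3(1) unfolding \<eta>_def abs_le_iff by linarith
  qed
  define R1 where "R1 = sqrt (1/16 + w)"
  define R0 where "R0 = sqrt (1/16 - w)"
  have R: "0 \<le> R0" "R0 \<le> R1" "R1 \<le> 1/2"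
  proof -
    show "0 \<le> R0" unfolding R0_def using w(2) by simp
    show "R0 \<le> R1" unfolding R0_def R1_def using w(1) by simp
    have "sqrt (1/16 + w) \<le> sqrt (1/4)" using w(2) by (intro real_sqrt_le_mono) simp
    moreover have "sqrt (1/4) = (1/2::real)" by (rule real_sqrt_unique) (simp_all add: power2_eq_square)
    ultimately show "R1 \<le> 1/2" unfolding R1_def by simp
  qed
  have subc: "cball (c0::real^'n) R1 \<subseteq> cbox 0 1" by (rule cball_sub_cube[OF R(3)])
  have subb: "ball (c0::real^'n) R0 \<subseteq> cball c0 R1" using R(2) by auto
  define Q where "Q = (4 * m) powr p"
  define Bnd where "Bnd x = 2 * (\<delta>/4) powr p + Q * (indicator (cball c0 R1) x - indicator (ball c0 R0) x)"
    for x :: "real^'n"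
  have ptI: "\<bar>f x\<bar> powr p + norm (grad f x) powr p \<le> Bnd x" if x: "x \<in> cbox 0 1" for x
  proof -
    have p0: "0 \<le> p" using p by simp
    have t1: "\<bar>f x\<bar> powr p \<le> (\<delta>/4) powr p" using fpt[of x] p0 by (intro powr_mono2) auto
    define g where "g = norm (gbump m w x)"
    have "norm (grad f x) \<le> \<theta> * norm (ga x) + g"
      unfolding gf g_def using norm_triangle_ineq4[of "\<theta> *\<^sub>R ga x" "gbump m w x"] \<theta> by simp
    also have "\<dots> \<le> \<theta> * M + g" using M(2)[OF x] \<theta> by (simp add: mult_left_mono)
    finally have "norm (grad f x) powr p \<le> (\<theta> * M + g) powr p" using p0 by (intro powr_mono2) auto
    also have "\<dots> \<le> (2 * (\<theta> * M)) powr p + (2 * g) powr p"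
      using \<theta> M(1) p0 by (intro powr_sum2) (auto simp: g_def)
    also have "(2 * (\<theta> * M)) powr p \<le> (\<delta>/4) powr p"
      using \<theta>3(2) \<theta> M(1) p0 by (intro powr_mono2) auto
    finally have t2: "norm (grad f x) powr p \<le> (\<delta>/4) powr p + (2 * g) powr p" by simp
    have t3: "(2 * g) powr p \<le> Q * (indicator (cball c0 R1) x - indicator (ball c0 R0) x)"
    proof (cases "gbump m w x = 0")
      case True
      have "0 \<le> (indicator (cball c0 R1) x - indicator (ball c0 R0) x :: real)"
        using subb by (auto simp: indicator_def)
      then show ?thesis using True by (simp add: g_def Q_def)
    next
      case False
      note gc = gbump_cube[OF m0 w(1,2) x False]
      have "(indicator (cball c0 R1) x - indicator (ball c0 R0) x :: real) = 1"
        using gc(1) by (simp add: R0_def R1_def indicator_def)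
      moreover have "(2 * g) powr p \<le> (4 * m) powr p"
        using gc(2) p0 by (intro powr_mono2) (auto simp: g_def)
      ultimately show ?thesis by (simp add: Q_def)
    qed
    show ?thesis using t1 t2 t3 unfolding Bnd_def by linarith
  qed
  have i1: "(indicator (cball (c0::real^'n) R1) has_integral measure lebesgue (cball (c0::real^'n) R1)) (cbox 0 1)"
  proof -
    have eqI: "cball (c0::real^'n) R1 \<inter> cbox 0 1 = cball (c0::real^'n) R1" using subc by blast
    have "(indicat_real (cball (c0::real^'n) R1)) integrable_on cbox 0 (1::real^'n)"
      unfolding integrable_on_indicator eqI by (rule lmeasurable_cball)
    moreover have "integral (cbox 0 1) (indicat_real (cball (c0::real^'n) R1)) = measure lebesgue (cball (c0::real^'n) R1)"
      using integral_indicator[of "cball (c0::real^'n) R1" "cbox 0 1", unfolded eqI, OF lmeasurable_cball] .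
    ultimately show ?thesis using integrable_integral by metis
  qed
  have i0: "(indicator (ball (c0::real^'n) R0) has_integral measure lebesgue (ball (c0::real^'n) R0)) (cbox 0 1)"
  proof -
    have eqI: "ball (c0::real^'n) R0 \<inter> cbox 0 1 = ball (c0::real^'n) R0" using subc subb by blast
    have "(indicat_real (ball (c0::real^'n) R0)) integrable_on cbox 0 (1::real^'n)"
      unfolding integrable_on_indicator eqI by (rule lmeasurable_ball)
    moreover have "integral (cbox 0 1) (indicat_real (ball (c0::real^'n) R0)) = measure lebesgue (ball (c0::real^'n) R0)"
      using integral_indicator[of "ball (c0::real^'n) R0" "cbox 0 1", unfolded eqI, OF lmeasurable_ball] .
    ultimately show ?thesis using integrable_integral by metis
  qed
  have mc1: "measure lebesgue (cball (c0::real^'n) R1) = uv * R1 ^ CARD('n)"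
    using meas_cball[of R1 c0] R by (simp add: uv_def)
  have mc0: "measure lebesgue (ball (c0::real^'n) R0) = uv * R0 ^ CARD('n)"
    using meas_ball[of R0 c0] R by (simp add: uv_def)
  have iB: "(Bnd has_integral (2 * (\<delta>/4) powr p + \<phi> w)) (cbox 0 1)"
  proof -
    have "((\<lambda>x. 2 * (\<delta>/4) powr p) has_integral (measure lborel (cbox 0 (1::real^'n)) *\<^sub>R (2 * (\<delta>/4) powr p))) (cbox 0 (1::real^'n))"
      by (rule has_integral_const)
    then have c1: "((\<lambda>x. 2 * (\<delta>/4) powr p) has_integral (2 * (\<delta>/4) powr p)) (cbox 0 (1::real^'n))"
      by (simp add: cube_content)
    have c2: "((\<lambda>x. Q * (indicator (cball c0 R1) x - indicator (ball c0 R0) x)) has_integral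
        (Q * (uv * R1 ^ CARD('n) - uv * R0 ^ CARD('n)))) (cbox 0 (1::real^'n))"
      using has_integral_mult_right[OF has_integral_diff[OF i1 i0], of Q] by (simp add: mc1 mc0)
    have "\<phi> w = Q * (uv * R1 ^ CARD('n) - uv * R0 ^ CARD('n))"
      by (simp add: \<phi>_def Q_def R0_def R1_def)
    then show ?thesis using has_integral_add[OF c1 c2] unfolding Bnd_def[abs_def] by simp
  qed
  have intle: "integral (cbox 0 1) (\<lambda>x. \<bar>f x\<bar> powr p + norm (grad f x) powr p) \<le> \<delta> powr p"
  proof (cases "(\<lambda>x. \<bar>f x\<bar> powr p + norm (grad f x) powr p) integrable_on cbox 0 (1::real^'n)")
    case True
    have "integral (cbox 0 1) (\<lambda>x. \<bar>f x\<bar> powr p + norm (grad f x) powr p) \<le> integral (cbox 0 1) Bnd"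
      using True iB ptI by (intro integral_le) auto
    also have "\<dots> = 2 * (\<delta>/4) powr p + \<phi> w" using iB by (rule integral_unique)
    also have "\<dots> \<le> \<delta> powr p" using four_powr[OF p, of \<delta>] \<phi>w by linarith
    finally show ?thesis .
  next
    case False
    then show ?thesis by (simp add: not_integrable_integral)
  qed
  have intge: "0 \<le> integral (cbox 0 1) (\<lambda>x. \<bar>f x\<bar> powr p + norm (grad f x) powr p)"
  proof (cases "(\<lambda>x. \<bar>f x\<bar> powr p + norm (grad f x) powr p) integrable_on cbox 0 (1::real^'n)")
    case True then show ?thesis by (rule integral_nonneg) auto
  next
    case False then show ?thesis by (simp add: not_integrable_integral)
  qed
  have W: "W1p_norm p f \<le> \<delta>"
  proof -
    have "W1p_norm p f \<le> (\<delta> powr p) powr (1/p)"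
      unfolding W1p_norm_def using intle intge p by (intro powr_mono2) auto
    also have "\<dots> = \<delta>" using p \<delta> by (simp add: powr_powr)
    finally show ?thesis .
  qed
  show ?thesis
  proof (intro exI conjI)
    show "C1_torus \<Lambda> (\<lambda>x. b x + bump m w x)" by (rule A(1))
    show "sup_dist a (\<lambda>x. b x + bump m w x) \<le> \<delta>"
    proof (rule sup_dist_le)
      fix x
      have "\<bar>a x - (b x + bump m w x)\<bar> \<le> \<delta>/4" using fpt[of x] unfolding f_def .
      then show "\<bar>a x - (b x + bump m w x)\<bar> \<le> \<delta>" using \<delta> by linarith
    qed
    show "W1p_norm p (\<lambda>x. a x - (b x + bump m w x)) \<le> \<delta>" using W by (simp add: f_def[abs_def])
    show "strict_stat_subsol (\<lambda>x. b x + bump m w x) (ball c0 (1/4))" by (rule A(2))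
    show "C2_boundary (ball (c0::real^'n) (1/4))" by (rule A(3))
  qed (use ball_props in auto)
qed

theorem lemma4p6:
  fixes \<Lambda> :: real
  assumes "CARD('n::finite) \<ge> 2" and "\<Lambda> > 1"
  shows "(\<forall>(a :: real^'n \<Rightarrow> real) \<delta>. C0_torus \<Lambda> a \<and> \<delta> > 0 \<longrightarrow>
            (\<exists>a\<^sub>\<delta> (\<Omega> :: (real^'n) set). C1_torus \<Lambda> a\<^sub>\<delta> \<and> sup_dist a a\<^sub>\<delta> \<le> \<delta> \<and>
               \<Omega> \<noteq> {} \<and> bounded \<Omega> \<and> open \<Omega> \<and> C2_boundary \<Omega> \<and> strict_stat_subsol a\<^sub>\<delta> \<Omega>))
       \<and> (\<forall>(a :: real^'n \<Rightarrow> real) \<delta> p. C2_torus \<Lambda> a \<and> \<delta> > 0 \<and> p \<ge> 1 \<longrightarrow>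
            (\<exists>a\<^sub>\<delta> (\<Omega> :: (real^'n) set). C1_torus \<Lambda> a\<^sub>\<delta> \<and> sup_dist a a\<^sub>\<delta> \<le> \<delta> \<and>
               W1p_norm p (\<lambda>x. a x - a\<^sub>\<delta> x) \<le> \<delta> \<and>
               \<Omega> \<noteq> {} \<and> bounded \<Omega> \<and> open \<Omega> \<and> C2_boundary \<Omega> \<and> strict_stat_subsol a\<^sub>\<delta> \<Omega>))"
  using conj1[OF assms(2)] conj2[OF assms(2)] by blast

end
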